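(* Let $\ell\ge1$ and $N$ be integers and let $f:\binom{[N]}{2}\to\binom{[N]}{\ell}$ satisfy $f(e)\cap e=\emptyset$ for all $e\in\binom{[N]}{2}$. Let $X\subseteq[N]$ be the set of $x\in[N]$ such that $x\in f(e)$ for at most $\ell N$ pairs $e\in\binom{[N]}{2}$. Let $G$ be a graph with $n$ vertices and $m$ edges, where $m$ is a perfect square, $n/\sqrt m=2^T$ for a positive integer $T$, and fewer than $n/2$ vertices of $G$ are isolated. Let $u_1,\dots,u_n$, $\prec$, $U_0,\dots,U_T$ and the Embedding Algorithm be as described in the context. Suppose $X_0',\dots,X_T'\subseteq X$ are pairwise disjoint sets satisfying properties (P1), (P2), (P3) of the context. Then there are subsets $X_j\subseteq X_j'$, $0\le j\le T$, such that the Embedding Algorithm with input $t=T$ and $X_0,\dots,X_T$ does not fail and returns an injection $\varphi:V(G)\to X$ satisfying $f(\{\varphi(v),\varphi(u)\})\cap\varphi(V(G))=\emptyset$ for every edge $vu\in E(G)$.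
   Context: Setup. $[N]=\{1,\dots,N\}$, $\binom{[N]}{k}$ is the family of $k$-subsets. Order $V(G)$ as $u_1,\dots,u_n$ with $d(u_1)\ge\dots\ge d(u_n)$ (degrees in $G$), and write $u_i\prec u_j$ iff $i<j$. Let $U_0=\{u_i:1\le i\le\sqrt m\}$ and for $1\le j\le T$ let $U_j=\{u_i:\sqrt m\,2^{j-1}<i\le\sqrt m\,2^j\}$. For sets $A_0,\dots,A_T$ write $A_{\le j}=A_0\cup\dots\cup A_j$. Embedding Algorithm. Input: $t\in\{0,\dots,T\}$ and pairwise disjoint $X_0,\dots,X_t\subseteq X$. Go over $j=0,\dots,t$ in order, and for each $j$ over the vertices $u\in U_j$ in the order $\prec$. For such $u$, let $X_u$ be the set of $x\in X_j$ such that: (a) $x\ne\varphi(v)$ for every $v\prec u$; (b) $x\notin f(\{\varphi(v),\varphi(w)\})$ for every edge $vw\in E(G)$ with $v,w\in U_0\cup\dots\cup U_{j-1}$; (c) for every neighbour $v$ of $u$ with $v\prec u$, $f(\{\varphi(v),x\})\cap X_{\le j}=\emptyset$. If $X_u=\emptyset$, stop and report failure; otherwise set $\varphi(u)$ to be the smallest element of $X_u$ (in the natural order of $[N]$). If it does not fail, the output is the map $\varphi:U_{\le t}\to X_{\le t}$. Properties of disjoint sets $X_0',\dots,X_T'\subseteq X$: (P1) $3.9|U_j|<|X_j'|<4.1|U_j|$ for all $0\le j\le T$. (P2) For each $j\in\{0,\dots,T-1\}$ and every choice of subsets $X_i\subseteq X_i'$ ($0\le i\le j$), if the Embedding Algorithm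 with input $t=j$ and $X_0,\dots,X_j$ does not fail and outputs $\varphi$, then the set $L=\bigcup f(\{\varphi(v),\varphi(u)\})$, the union over all edges $vu\in E(G)$ with $v,u\in U_{\le j}$, satisfies $|L\cap X_{j+1}'|\le|X_{j+1}'|/9$. (P3) For all $0\le i\le j\le T$, the number $r_{i,j}$ of pairs of distinct vertices $(x,y)\in X_i'\times X_j'$ with $f(\{x,y\})\cap X'_{\le j}\neq\emptyset$ satisfies $r_{i,j}\le|U_i||U_j|^2/(5m)$. *)

theory Defs
  imports Complex_Main
begin

text \<open>Vertices of G are enumerated as u 1, ..., u n (positions); u i precedes u j iff i < j.
  Index blocks: U_0 = positions 1 .. sqrt m, U_j = positions in (sqrt m 2^(j-1), sqrt m 2^j].\<close>

definition Ublk :: "nat \<Rightarrow> nat \<Rightarrow> nat set" where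
  "Ublk m j = {i. 1 \<le> i \<and>
     (if j = 0 then real i \<le> sqrt (real m)
      else sqrt (real m) * 2 ^ (j - 1) < real i \<and> real i \<le> sqrt (real m) * 2 ^ j)}"

definition Ule :: "nat \<Rightarrow> nat \<Rightarrow> nat set" where
  "Ule m j = (\<Union>i\<le>j. Ublk m i)"

definition blk :: "nat \<Rightarrow> nat \<Rightarrow> nat" where
  "blk m i = (LEAST j. i \<in> Ublk m j)"

definition Xle :: "(nat \<Rightarrow> nat set) \<Rightarrow> nat \<Rightarrow> nat set" where
  "Xle Xs j = (\<Union>i\<le>j. Xs i)"

text \<open>The set X_u of admissible images for the vertex at position i, given the partial map phi
  on earlier positions (conditions (a), (b), (c)).\<close>
definition cand :: "(nat set \<Rightarrow> nat set) \<Rightarrow> 'a set set \<Rightarrow> (nat \<Rightarrow> 'a) \<Rightarrow> nat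
    \<Rightarrow> (nat \<Rightarrow> nat set) \<Rightarrow> (nat \<Rightarrow> nat) \<Rightarrow> nat \<Rightarrow> nat set" where
  "cand f Ed u m Xs phi i =
    (let j = blk m i in
     {x \<in> Xs j.
        x \<notin> phi ` {1..<i}
      \<and> (\<forall>k l. 0 < j \<and> k \<in> Ule m (j - 1) \<and> l \<in> Ule m (j - 1) \<and> {u k, u l} \<in> Ed
              \<longrightarrow> x \<notin> f {phi k, phi l})
      \<and> (\<forall>k. 1 \<le> k \<and> k < i \<and> {u k, u i} \<in> Ed \<longrightarrow> f {phi k, x} \<inter> Xle Xs j = {})})"

fun emb_run :: "(nat set \<Rightarrow> nat set) \<Rightarrow> 'a set set \<Rightarrow> (nat \<Rightarrow> 'a) \<Rightarrow> nat
    \<Rightarrow> (nat \<Rightarrow> nat set) \<Rightarrow> nat \<Rightarrow> (nat \<Rightarrow> nat) option" where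
  "emb_run f Ed u m Xs 0 = Some (\<lambda>_. 0)"
| "emb_run f Ed u m Xs (Suc k) =
     (case emb_run f Ed u m Xs k of
        None \<Rightarrow> None
      | Some phi \<Rightarrow>
          (let C = cand f Ed u m Xs phi (Suc k) in
           if C = {} then None else Some (phi(Suc k := Min C))))"

text \<open>The Embedding Algorithm with input t: processes U_0, ..., U_t, i.e. positions
  1 .. floor(sqrt m 2^t). The output is indexed by positions.\<close>
definition emb_alg :: "(nat set \<Rightarrow> nat set) \<Rightarrow> 'a set set \<Rightarrow> (nat \<Rightarrow> 'a) \<Rightarrow> nat
    \<Rightarrow> (nat \<Rightarrow> nat set) \<Rightarrow> nat \<Rightarrow> (nat \<Rightarrow> nat) option" where
  "emb_alg f Ed u m Xs t = emb_run f Ed u m Xs (nat \<lfloor>sqrt (real m) * 2 ^ t\<rfloor>)"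

definition deg :: "'a set set \<Rightarrow> 'a \<Rightarrow> nat" where
  "deg Ed v = card {e \<in> Ed. v \<in> e}"

definition Xset :: "(nat set \<Rightarrow> nat set) \<Rightarrow> nat \<Rightarrow> nat \<Rightarrow> nat set" where
  "Xset f N l = {x \<in> {1..N}. card {e. e \<subseteq> {1..N} \<and> card e = 2 \<and> x \<in> f e} \<le> l * N}"

end

theory Submission
  imports Defs
begin

lemma run_prefix:
  "emb_run f Ed u m Xs k = Some phi \<Longrightarrow> k' \<le> k \<Longrightarrow>
   \<exists>phi'. emb_run f Ed u m Xs k' = Some phi' \<and> (\<forall>i. i \<le> k' \<longrightarrow> 1 \<le> i \<longrightarrow> phi' i = phi i)"
proof (induction k arbitrary: phi)
  case 0
  then show ?case by auto
next
  case (Suc k)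
  show ?case
  proof (cases "k' = Suc k")
    case True
    then show ?thesis using Suc.prems by auto
  next
    case False
    then have k': "k' \<le> k" using Suc.prems by auto
    from Suc.prems(1) obtain phi0 where r0: "emb_run f Ed u m Xs k = Some phi0"
      by (cases "emb_run f Ed u m Xs k") auto
    have ph: "phi = phi0(Suc k := Min (cand f Ed u m Xs phi0 (Suc k)))"
      using Suc.prems(1) r0 by (simp add: Let_def split: if_splits)
    from Suc.IH[OF r0 k'] obtain phi' where "emb_run f Ed u m Xs k' = Some phi'"
      "\<forall>i. i \<le> k' \<longrightarrow> 1 \<le> i \<longrightarrow> phi' i = phi0 i" by blast
    then show ?thesis using k' ph by auto
  qed
qed

lemma run_Suc:
  "emb_run f Ed u m Xs k = Some phi \<Longrightarrow> cand f Ed u m Xs phi (Suc k) \<noteq> {} \<Longrightarrow>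
   emb_run f Ed u m Xs (Suc k) = Some (phi(Suc k := Min (cand f Ed u m Xs phi (Suc k))))"
  by (simp add: Let_def)

lemma cand_cong:
  assumes "\<And>k. 1 \<le> k \<Longrightarrow> k < i \<Longrightarrow> phi k = phi' k"
    and "\<And>k. 0 < blk m i \<Longrightarrow> k \<in> Ule m (blk m i - 1) \<Longrightarrow> 1 \<le> k \<and> k < i"
  shows "cand f Ed u m Xs phi i = cand f Ed u m Xs phi' i"
proof -
  have im: "phi ` {1..<i} = phi' ` {1..<i}" using assms(1) by (auto intro!: image_cong)
  show ?thesis unfolding cand_def Let_def im
    using assms by (intro Collect_cong conj_cong refl) (metis atLeastLessThan_iff)+
qed


locale embctx =
  fixes N n m T s :: nat
    and f :: "nat set \<Rightarrow> nat set"
    and V :: "'a set" and Ed :: "'a set set"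
    and u :: "nat \<Rightarrow> 'a"
    and X :: "nat set" and X' :: "nat \<Rightarrow> nat set"
  assumes finX: "finite X"
    and Vfin: "finite V" and Ed_sub: "\<And>e. e \<in> Ed \<Longrightarrow> e \<subseteq> V \<and> card e = 2"
    and n_def: "n = card V" and m_def: "m = card Ed"
    and ms: "m = s ^ 2" and s_pos: "0 < s" and nT: "n = s * 2 ^ T"
    and u: "bij_betw u {1..n} V"
    and u_ord: "\<And>i j. 1 \<le> i \<Longrightarrow> i < j \<Longrightarrow> j \<le> n \<Longrightarrow> deg Ed (u j) \<le> deg Ed (u i)"
    and X'_sub: "\<And>j. j \<le> T \<Longrightarrow> X' j \<subseteq> X"
    and X'_disj: "\<And>i j. i \<le> T \<Longrightarrow> j \<le> T \<Longrightarrow> i \<noteq> j \<Longrightarrow> X' i \<inter> X' j = {}"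
    and P1: "\<And>j. j \<le> T \<Longrightarrow>
              3.9 * real (card (u ` Ublk m j)) < real (card (X' j))
            \<and> real (card (X' j)) < 4.1 * real (card (u ` Ublk m j))"
    and P2: "\<And>j Xs phi. j < T \<Longrightarrow> (\<forall>i\<le>j. Xs i \<subseteq> X' i) \<Longrightarrow>
              emb_alg f Ed u m Xs j = Some phi \<Longrightarrow>
              real (card ((\<Union>{f {phi k, phi k'} | k k'. k \<in> Ule m j \<and> k' \<in> Ule m j
                                                   \<and> {u k, u k'} \<in> Ed}) \<inter> X' (Suc j)))
                \<le> real (card (X' (Suc j))) / 9"
    and P3: "\<And>i j. i \<le> j \<Longrightarrow> j \<le> T \<Longrightarrow>
              real (card {(x, y). x \<in> X' i \<and> y \<in> X' j \<and> x \<noteq> y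
                                  \<and> f {x, y} \<inter> Xle X' j \<noteq> {}})
                \<le> real (card (u ` Ublk m i)) * real (card (u ` Ublk m j)) ^ 2 / (5 * real m)"
begin

definition fst_b :: "nat \<Rightarrow> nat" where
  "fst_b j = (if j = 0 then 1 else s * 2 ^ (j - 1) + 1)"

lemma sqrt_m: "sqrt (real m) = real s"
  using ms by simp

lemma Ublk_eq: "Ublk m j = {fst_b j .. s * 2 ^ j}"
proof -
  have e: "real s * 2 ^ k = real (s * 2 ^ k)" for k by simp
  show ?thesis
    unfolding Ublk_def sqrt_m fst_b_def e of_nat_le_iff of_nat_less_iff
    by (cases j) auto
qed

lemma Ule_eq: "Ule m j = {1 .. s * 2 ^ j}"
proof (induction j)
  case 0
  then show ?case by (simp add: Ule_def Ublk_eq fst_b_def)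
next
  case (Suc j)
  have "Ule m (Suc j) = Ule m j \<union> Ublk m (Suc j)"
    unfolding Ule_def by (simp add: atMost_Suc Un_commute)
  also have "\<dots> = {1 .. s * 2 ^ Suc j}"
    unfolding Suc Ublk_eq fst_b_def by auto
  finally show ?case .
qed

lemma card_Ublk: "card (Ublk m j) = (if j = 0 then s else s * 2 ^ (j - 1))"
proof (cases j)
  case 0 then show ?thesis by (simp add: Ublk_eq fst_b_def)
next
  case (Suc k)
  have "s * 2 ^ Suc k + 1 - (s * 2 ^ k + 1) = s * 2 ^ k" by simp
  then show ?thesis using Suc by (simp add: Ublk_eq fst_b_def)
qed

lemma Ublk_order: "j < j' \<Longrightarrow> i \<in> Ublk m j \<Longrightarrow> k \<in> Ublk m j' \<Longrightarrow> i < k"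
proof -
  assume a: "j < j'" "i \<in> Ublk m j" "k \<in> Ublk m j'"
  have h: "s * 2 ^ j \<le> s * 2 ^ (j' - 1)" using a(1) s_pos by (intro mult_le_mono2 power_increasing) auto
  have i: "i \<le> s * 2 ^ j" using a(2) by (simp add: Ublk_eq)
  have k: "s * 2 ^ (j' - 1) < k" using a(1,3) by (simp add: Ublk_eq fst_b_def)
  show "i < k" using h i k by linarith
qed

lemma blk_eq: "i \<in> Ublk m j \<Longrightarrow> blk m i = j"
  unfolding blk_def
proof (rule Least_equality)
  assume "i \<in> Ublk m j" then show "i \<in> Ublk m j" .
next
  fix y assume "i \<in> Ublk m j" "i \<in> Ublk m y"
  then show "j \<le> y" using Ublk_order[of y j i i] by (meson less_irrefl not_le)
qed

lemma in_blk: "1 \<le> i \<Longrightarrow> i \<le> n \<Longrightarrow> blk m i \<le> T \<and> i \<in> Ublk m (blk m i)"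
proof -
  assume "1 \<le> i" "i \<le> n"
  then have "i \<in> Ule m T" by (simp add: Ule_eq nT)
  then obtain j where "j \<le> T" "i \<in> Ublk m j" by (auto simp: Ule_def)
  then show ?thesis using blk_eq by auto
qed

lemma Ublk_sub: "j \<le> T \<Longrightarrow> Ublk m j \<subseteq> {1..n}"
proof -
  assume "j \<le> T"
  then have "Ublk m j \<subseteq> Ule m T" by (auto simp: Ule_def)
  then show ?thesis by (simp add: Ule_eq nT)
qed

lemma blk_mono: "1 \<le> k \<Longrightarrow> k \<le> i \<Longrightarrow> i \<le> n \<Longrightarrow> blk m k \<le> blk m i"
proof (rule ccontr)
  assume a: "1 \<le> k" "k \<le> i" "i \<le> n" "\<not> blk m k \<le> blk m i"
  have "k \<in> Ublk m (blk m k)" "i \<in> Ublk m (blk m i)" using a in_blk by auto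
  then have "i < k" using Ublk_order a(4) by (meson not_le)
  then show False using a(2) by simp
qed

lemma Ule_before: "1 \<le> i \<Longrightarrow> i \<le> n \<Longrightarrow> 0 < blk m i \<Longrightarrow> k \<in> Ule m (blk m i - 1) \<Longrightarrow> 1 \<le> k \<and> k < i"
proof -
  assume a: "1 \<le> i" "i \<le> n" "0 < blk m i" "k \<in> Ule m (blk m i - 1)"
  then have "i \<in> Ublk m (blk m i)" using in_blk by auto
  then have "s * 2 ^ (blk m i - 1) < i" using a(3) by (auto simp: Ublk_eq fst_b_def)
  then show ?thesis using a(4) by (auto simp: Ule_eq)
qed


definition cU :: "nat \<Rightarrow> nat" where "cU j = card (Ublk m j)"
definition D :: "nat \<Rightarrow> nat" where
  "D j = (if j = 0 then s else deg Ed (u (s * 2 ^ (j - 1) + 1)))"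
definition bb :: "nat \<Rightarrow> nat \<Rightarrow> nat \<Rightarrow> nat" where
  "bb j k y = card {x \<in> X' k. y \<noteq> x \<and> f {y, x} \<inter> Xle X' k \<noteq> {}}"
definition BadK :: "nat \<Rightarrow> nat \<Rightarrow> nat set" where
  "BadK j k = {y \<in> X' j. cU k < bb j k y * D k}"
definition Bad :: "nat \<Rightarrow> nat set" where
  "Bad j = (\<Union>k\<in>{j..T}. BadK j k)"
definition Xs :: "nat \<Rightarrow> nat set" where "Xs j = X' j - Bad j"

lemma inj_u: "inj_on u {1..n}" using u by (simp add: bij_betw_def)

lemma cU_img: assumes "j \<le> T" shows "card (u ` Ublk m j) = cU j"
  unfolding cU_def using card_image[OF inj_on_subset[OF inj_u Ublk_sub[OF assms]]] .

lemma cU_pos: "0 < cU j" unfolding cU_def card_Ublk using s_pos by auto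

lemma cU_Suc: "cU (Suc j) \<le> 2 * cU j"
  unfolding cU_def card_Ublk by (cases j) auto

lemma m_pos: "0 < m" using ms s_pos by simp

lemma finX': "j \<le> T \<Longrightarrow> finite (X' j)" using X'_sub finX by (meson finite_subset)

lemma finEd: "finite Ed"
proof -
  have "Ed \<subseteq> Pow V" using Ed_sub by auto
  moreover have "finite (Pow V)" using Vfin by simp
  ultimately show ?thesis by (rule finite_subset)
qed

lemma handshake: "(\<Sum>p\<in>{1..n}. deg Ed (u p)) = 2 * m"
proof -
  have "(\<Sum>p\<in>{1..n}. deg Ed (u p)) = (\<Sum>v\<in>V. deg Ed v)"
    using sum.reindex_bij_betw[OF u, of "deg Ed"] by simp
  also have "\<dots> = (\<Sum>v\<in>V. \<Sum>e\<in>Ed. if v \<in> e then 1 else 0)"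
    unfolding deg_def using finEd by (simp add: sum.If_cases Int_def)
  also have "\<dots> = (\<Sum>e\<in>Ed. \<Sum>v\<in>V. if v \<in> e then 1 else 0)"
    by (rule sum.swap)
  also have "\<dots> = (\<Sum>e\<in>Ed. card e)"
  proof (rule sum.cong)
    fix e assume "e \<in> Ed"
    then have "e \<subseteq> V" using Ed_sub by auto
    then have "V \<inter> {v. v \<in> e} = e" by auto
    then show "(\<Sum>v\<in>V. if v \<in> e then 1 else 0) = card e"
      using Vfin by (simp add: sum.If_cases)
  qed simp
  also have "\<dots> = (\<Sum>e\<in>Ed. 2)" using Ed_sub by (intro sum.cong) auto
  finally show ?thesis using m_def by simp
qed

lemma degsum: "(\<Sum>k\<le>T. cU k * D k) \<le> 5 * m"
proof -
  have step: "cU (Suc k) * D (Suc k) \<le> 2 * (\<Sum>p\<in>Ublk m k. deg Ed (u p))" if k: "k < T" for k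
  proof -
    have bd: "D (Suc k) \<le> deg Ed (u p)" if p: "p \<in> Ublk m k" for p
    proof -
      have lt: "s * 2 ^ k < s * 2 ^ T" using k s_pos by simp
      have le: "s * 2 ^ k + 1 \<le> n" using nT lt by linarith
      show "D (Suc k) \<le> deg Ed (u p)" unfolding D_def
        using p le by (auto simp: Ublk_eq fst_b_def intro!: u_ord split: if_splits)
    qed
    have "cU k * D (Suc k) \<le> (\<Sum>p\<in>Ublk m k. deg Ed (u p))"
      unfolding cU_def using sum_bounded_below[of "Ublk m k" "D (Suc k)" "\<lambda>p. deg Ed (u p)"] bd
      by simp
    moreover have "cU (Suc k) * D (Suc k) \<le> 2 * cU k * D (Suc k)"
      using cU_Suc[of k] by (rule mult_le_mono1)
    ultimately show ?thesis by (metis (no_types, lifting) le_trans mult.assoc mult_le_mono2)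
  qed
  have disj: "(\<Sum>k<T. \<Sum>p\<in>Ublk m k. deg Ed (u p)) = (\<Sum>p\<in>(\<Union>k<T. Ublk m k). deg Ed (u p))"
  proof (rule sum.UNION_disjoint[symmetric])
    show "\<forall>i\<in>{..<T}. finite (Ublk m i)" by (simp add: Ublk_eq)
    show "\<forall>i\<in>{..<T}. \<forall>j\<in>{..<T}. i \<noteq> j \<longrightarrow> Ublk m i \<inter> Ublk m j = {}"
      by (metis blk_eq disjoint_iff)
  qed simp
  have sub: "(\<Union>k<T. Ublk m k) \<subseteq> {1..n}" 
  proof (rule UN_least)
    fix k assume "k \<in> {..<T}" then show "Ublk m k \<subseteq> {1..n}" using Ublk_sub by simp
  qed
  have "(\<Sum>k<T. cU (Suc k) * D (Suc k)) \<le> (\<Sum>k<T. 2 * (\<Sum>p\<in>Ublk m k. deg Ed (u p)))"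
    using step by (intro sum_mono) auto
  also have "\<dots> = 2 * (\<Sum>p\<in>(\<Union>k<T. Ublk m k). deg Ed (u p))"
    unfolding disj[symmetric] by (rule sum_distrib_left[symmetric])
  also have "\<dots> \<le> 2 * (\<Sum>p\<in>{1..n}. deg Ed (u p))"
    using sub by (intro mult_le_mono2 sum_mono2) (simp_all)
  finally have A: "(\<Sum>k<T. cU (Suc k) * D (Suc k)) \<le> 4 * m" using handshake by simp
  have "(\<Sum>k\<le>T. cU k * D k) = cU 0 * D 0 + (\<Sum>k<T. cU (Suc k) * D (Suc k))"
    by (simp add: sum.atMost_shift)
  also have "cU 0 * D 0 = m" unfolding cU_def D_def card_Ublk using ms by (simp add: power2_eq_square)
  finally show ?thesis using A by simp
qed


lemma BadK_card:
  assumes jk: "j \<le> k" and kT: "k \<le> T"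
  shows "real (card (BadK j k)) \<le> real (cU j) * real (cU k) * real (D k) / (5 * real m)"
proof -
  have finj: "finite (X' j)" and fink: "finite (X' k)" using finX' jk kT by auto
  have eq: "{(x, y). x \<in> X' j \<and> y \<in> X' k \<and> x \<noteq> y \<and> f {x, y} \<inter> Xle X' k \<noteq> {}}
      = Sigma (X' j) (\<lambda>x. {y \<in> X' k. x \<noteq> y \<and> f {x, y} \<inter> Xle X' k \<noteq> {}})" by auto
  have pc: "card {(x, y). x \<in> X' j \<and> y \<in> X' k \<and> x \<noteq> y \<and> f {x, y} \<inter> Xle X' k \<noteq> {}}
      = (\<Sum>x\<in>X' j. bb j k x)"
    unfolding eq bb_def using finj fink by (subst card_SigmaI) auto
  have r: "real (\<Sum>x\<in>X' j. bb j k x) \<le> real (cU j) * real (cU k) ^ 2 / (5 * real m)"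
    using P3[OF jk kT] cU_img[of j] cU_img[OF kT] jk kT unfolding pc by simp
  have bd: "cU k \<le> bb j k y * D k" if "y \<in> BadK j k" for y using that unfolding BadK_def by auto
  have "card (BadK j k) * cU k \<le> (\<Sum>y\<in>BadK j k. bb j k y * D k)"
    using sum_bounded_below[of "BadK j k" "cU k" "\<lambda>y. bb j k y * D k"] bd by simp
  also have "\<dots> \<le> (\<Sum>y\<in>X' j. bb j k y * D k)"
    using finj by (intro sum_mono2) (auto simp: BadK_def)
  also have "\<dots> = (\<Sum>y\<in>X' j. bb j k y) * D k" by (simp add: sum_distrib_right)
  finally have "real (card (BadK j k)) * real (cU k) \<le> real (\<Sum>y\<in>X' j. bb j k y) * real (D k)"
    by (metis of_nat_le_iff of_nat_mult)
  also have "\<dots> \<le> real (cU j) * real (cU k) ^ 2 / (5 * real m) * real (D k)"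
    using r by (intro mult_right_mono) auto
  also have "\<dots> = (real (cU j) * real (cU k) * real (D k) / (5 * real m)) * real (cU k)"
    by (simp add: power2_eq_square)
  finally have "real (card (BadK j k)) * real (cU k) \<le> (real (cU j) * real (cU k) * real (D k) / (5 * real m)) * real (cU k)" .
  then show ?thesis using cU_pos[of k] by (meson mult_right_le_imp_le of_nat_0_less_iff)
qed

lemma Bad_card: assumes "j \<le> T" shows "real (card (Bad j)) \<le> real (cU j)"
proof -
  have "card (Bad j) \<le> (\<Sum>k\<in>{j..T}. card (BadK j k))"
    unfolding Bad_def by (rule card_UN_le) simp
  then have "real (card (Bad j)) \<le> (\<Sum>k\<in>{j..T}. real (card (BadK j k)))"
    by (metis of_nat_le_iff of_nat_sum)
  also have "\<dots> \<le> (\<Sum>k\<in>{j..T}. real (cU j) * real (cU k) * real (D k) / (5 * real m))"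
    using BadK_card by (intro sum_mono) auto
  also have "\<dots> = real (cU j) / (5 * real m) * (\<Sum>k\<in>{j..T}. real (cU k * D k))"
    by (simp add: sum_distrib_left mult.assoc)
  also have "\<dots> \<le> real (cU j) / (5 * real m) * (\<Sum>k\<le>T. real (cU k * D k))"
    by (intro mult_left_mono sum_mono2) auto
  also have "\<dots> \<le> real (cU j) / (5 * real m) * (5 * real m)"
  proof (intro mult_left_mono)
    have "real (\<Sum>k\<le>T. cU k * D k) \<le> real (5 * m)" using degsum by (simp only: of_nat_le_iff)
    then show "(\<Sum>k\<le>T. real (cU k * D k)) \<le> 5 * real m" by simp
  qed simp
  also have "\<dots> = real (cU j)" using m_pos by simp
  finally show ?thesis .
qed


lemma Xs_sub: "Xs j \<subseteq> X' j" unfolding Xs_def by auto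

lemma emb_alg_eq: "emb_alg f Ed u m Xs' t = emb_run f Ed u m Xs' (s * 2 ^ t)"
proof -
  have "real s * 2 ^ t = real (s * 2 ^ t)" by simp
  then show ?thesis unfolding emb_alg_def sqrt_m by (simp only: floor_of_nat nat_int)
qed

lemma cand_D: "x \<in> cand f Ed u m Xs phi i \<Longrightarrow> x \<in> Xs (blk m i) \<and> x \<notin> phi ` {1..<i}"
  by (simp add: cand_def Let_def)

lemma cand_b: "x \<in> cand f Ed u m Xs phi i \<Longrightarrow> 0 < blk m i \<Longrightarrow> k \<in> Ule m (blk m i - 1)
   \<Longrightarrow> l \<in> Ule m (blk m i - 1) \<Longrightarrow> {u k, u l} \<in> Ed \<Longrightarrow> x \<notin> f {phi k, phi l}"
  by (simp add: cand_def Let_def)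

lemma cand_c: "x \<in> cand f Ed u m Xs phi i \<Longrightarrow> 1 \<le> k \<Longrightarrow> k < i \<Longrightarrow> {u k, u i} \<in> Ed
   \<Longrightarrow> f {phi k, x} \<inter> Xle Xs (blk m i) = {}"
  by (simp add: cand_def Let_def)

lemma card_diff_real: "finite B \<Longrightarrow> real (card A) - real (card B) \<le> real (card (A - B))"
proof -
  assume "finite B"
  then have "card A - card B \<le> card (A - B)" by (rule diff_card_le_card_Diff)
  then show ?thesis by linarith
qed

lemma Nb_card:
  assumes i: "1 \<le> i" "i \<le> n"
  shows "card {k. 1 \<le> k \<and> k < i \<and> {u k, u i} \<in> Ed} \<le> D (blk m i)"
proof -
  let ?Nb = "{k. 1 \<le> k \<and> k < i \<and> {u k, u i} \<in> Ed}"
  have ib: "i \<in> Ublk m (blk m i)" using in_blk i by auto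
  show ?thesis
  proof (cases "blk m i = 0")
    case True
    then have "i \<le> s" using ib by (simp add: Ublk_eq)
    moreover have "?Nb \<subseteq> {1..<i}" by auto
    then have "card ?Nb \<le> card {1..<i}" by (intro card_mono) auto
    ultimately show ?thesis using True by (simp add: D_def)
  next
    case False
    have "card ?Nb \<le> card {e \<in> Ed. u i \<in> e}"
    proof (rule card_inj_on_le)
      show "inj_on (\<lambda>k. {u k, u i}) ?Nb"
      proof (rule inj_onI)
        fix k k' assume k: "k \<in> ?Nb" and k': "k' \<in> ?Nb" and eq: "{u k, u i} = {u k', u i}"
        have "u k \<noteq> u i" using k i inj_u by (auto dest: inj_onD)
        then have "u k = u k'" using eq by (metis doubleton_eq_iff)
        then show "k = k'" using k k' i inj_u by (auto dest: inj_onD)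
      qed
      show "(\<lambda>k. {u k, u i}) ` ?Nb \<subseteq> {e \<in> Ed. u i \<in> e}" by auto
      show "finite {e \<in> Ed. u i \<in> e}" using finEd by simp
    qed
    also have "\<dots> = deg Ed (u i)" by (simp add: deg_def)
    also have "\<dots> \<le> deg Ed (u (s * 2 ^ (blk m i - 1) + 1))"
    proof (cases "s * 2 ^ (blk m i - 1) + 1 = i")
      case True then show ?thesis by simp
    next
      case False
      then have "s * 2 ^ (blk m i - 1) + 1 < i" using ib \<open>blk m i \<noteq> 0\<close> by (auto simp: Ublk_eq fst_b_def)
      then show ?thesis using i by (intro u_ord) auto
    qed
    finally show ?thesis using False by (simp add: D_def)
  qed
qed


lemma step_nonempty:
  assumes i: "1 \<le> i" "i \<le> n"
    and run: "emb_run f Ed u m Xs (i - 1) = Some phi"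
    and inv: "\<And>k. 1 \<le> k \<Longrightarrow> k < i \<Longrightarrow> phi k \<in> cand f Ed u m Xs phi k"
  shows "cand f Ed u m Xs phi i \<noteq> {}"
proof -
  define j where "j = blk m i"
  have jT: "j \<le> T" and ib: "i \<in> Ublk m j" using in_blk i j_def by auto
  have finj: "finite (X' j)" using finX' jT by simp
  have phiX: "phi k \<in> Xs (blk m k)" "blk m k \<le> T" "blk m k \<le> j" if "1 \<le> k" "k < i" for k
    using cand_D[OF inv[OF that]] in_blk[of k] blk_mono[of k i] that i j_def by auto
  define A where "A = phi ` ({1..<i} \<inter> Ublk m j)"
  define Nb where "Nb = {k. 1 \<le> k \<and> k < i \<and> {u k, u i} \<in> Ed}"
  define Cs where "Cs k = {x \<in> X' j. phi k \<noteq> x \<and> f {phi k, x} \<inter> Xle X' j \<noteq> {}}" for k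
  define C where "C = (\<Union>k\<in>Nb. Cs k)"
  obtain B where finB: "finite B" and cardB: "real (card B) \<le> real (card (X' j)) / 9"
    and Bprop: "\<And>x k l. x \<in> X' j \<Longrightarrow> x \<notin> B \<Longrightarrow> 0 < j \<Longrightarrow> k \<in> Ule m (j - 1) \<Longrightarrow> l \<in> Ule m (j - 1)
        \<Longrightarrow> {u k, u l} \<in> Ed \<Longrightarrow> x \<notin> f {phi k, phi l}"
  proof (cases "j = 0")
    case True
    then show ?thesis using that[of "{}"] by auto
  next
    case False
    have le: "s * 2 ^ (j - 1) \<le> i - 1" using ib False by (auto simp: Ublk_eq fst_b_def)
    obtain phi' where r': "emb_run f Ed u m Xs (s * 2 ^ (j - 1)) = Some phi'"
      and ag: "\<And>k. k \<le> s * 2 ^ (j - 1) \<Longrightarrow> 1 \<le> k \<Longrightarrow> phi' k = phi k"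
      using run_prefix[OF run le] by blast
    have ea: "emb_alg f Ed u m Xs (j - 1) = Some phi'" using r' emb_alg_eq by simp
    define L where "L = (\<Union>{f {phi' k, phi' k'} | k k'. k \<in> Ule m (j - 1) \<and> k' \<in> Ule m (j - 1)
                                                   \<and> {u k, u k'} \<in> Ed})"
    have P: "real (card (L \<inter> X' (Suc (j - 1)))) \<le> real (card (X' (Suc (j - 1)))) / 9"
      unfolding L_def using P2[OF _ _ ea] False jT Xs_sub by auto
    have sj: "Suc (j - 1) = j" using False by simp
    show ?thesis
    proof (rule that[of "L \<inter> X' j"])
      show "finite (L \<inter> X' j)" using finj by simp
      show "real (card (L \<inter> X' j)) \<le> real (card (X' j)) / 9" using P sj by simp
      fix x k l assume a: "x \<in> X' j" "x \<notin> L \<inter> X' j" "0 < j" "k \<in> Ule m (j - 1)" "l \<in> Ule m (j - 1)"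
        "{u k, u l} \<in> Ed"
      have "phi' k = phi k" "phi' l = phi l" using a(4,5) ag by (auto simp: Ule_eq)
      moreover have "x \<notin> f {phi' k, phi' l}" using a unfolding L_def by blast
      ultimately show "x \<notin> f {phi k, phi l}" by simp
    qed
  qed
  define S where "S = X' j - Bad j - A - B - C"
  have Ssub: "S \<subseteq> cand f Ed u m Xs phi i"
  proof
    fix x assume xS: "x \<in> S"
    have xX: "x \<in> X' j" "x \<in> Xs j" using xS by (auto simp: S_def Xs_def)
    have xa: "x \<notin> phi ` {1..<i}"
    proof
      assume "x \<in> phi ` {1..<i}"
      then obtain k where k: "1 \<le> k" "k < i" "x = phi k" by auto
      show False
      proof (cases "blk m k = j")
        case True
        then have "k \<in> Ublk m j" using in_blk[of k] k i by auto
        then have "x \<in> A" using k by (auto simp: A_def)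
        then show False using xS by (simp add: S_def)
      next
        case False
        then have "X' (blk m k) \<inter> X' j = {}" using X'_disj phiX[OF k(1,2)] jT by auto
        then show False using phiX(1)[OF k(1,2)] Xs_sub xX k(3) by blast
      qed
    qed
    have xb: "x \<notin> f {phi k, phi l}" if "0 < j" "k \<in> Ule m (j - 1)" "l \<in> Ule m (j - 1)" "{u k, u l} \<in> Ed" for k l
      using Bprop[OF xX(1) _ that] xS by (auto simp: S_def)
    have xc: "f {phi k, x} \<inter> Xle Xs j = {}" if "1 \<le> k" "k < i" "{u k, u i} \<in> Ed" for k
    proof -
      have "k \<in> Nb" using that by (simp add: Nb_def)
      then have "x \<notin> Cs k" using xS by (auto simp: S_def C_def)
      moreover have "phi k \<noteq> x" using xa that by auto
      ultimately have "f {phi k, x} \<inter> Xle X' j = {}" using xX by (simp add: Cs_def)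
      moreover have "Xle Xs j \<subseteq> Xle X' j" unfolding Xle_def using Xs_sub by blast
      ultimately show ?thesis by blast
    qed
    show "x \<in> cand f Ed u m Xs phi i"
      unfolding cand_def Let_def j_def[symmetric] using xX xa xb xc by auto
  qed
  have P1j: "3.9 * real (cU j) < real (card (X' j))" using P1[OF jT] cU_img[OF jT] by simp
  have cA: "real (card A) \<le> real (cU j) - 1"
  proof -
    have "{1..<i} \<inter> Ublk m j \<subseteq> Ublk m j - {i}" by auto
    then have "card ({1..<i} \<inter> Ublk m j) \<le> card (Ublk m j - {i})" by (intro card_mono) (auto simp: Ublk_eq)
    also have "\<dots> = cU j - 1" using ib by (simp add: cU_def Ublk_eq)
    finally have "card A \<le> cU j - 1" unfolding A_def using card_image_le[of "{1..<i} \<inter> Ublk m j" phi]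
      by (meson finite_Int finite_atLeastLessThan le_trans)
    then show ?thesis using cU_pos[of j] by linarith
  qed
  have cC: "real (card C) \<le> real (cU j)"
  proof -
    have finNb: "finite Nb" unfolding Nb_def by (rule finite_subset[of _ "{..<i}"]) auto
    have "card C \<le> (\<Sum>k\<in>Nb. card (Cs k))" unfolding C_def using finNb by (rule card_UN_le)
    also have "\<dots> = (\<Sum>k\<in>Nb. bb (blk m k) j (phi k))" by (simp add: Cs_def bb_def)
    finally have c1: "card C \<le> (\<Sum>k\<in>Nb. bb (blk m k) j (phi k))" .
    have nb: "card Nb \<le> D j" using Nb_card[OF i] by (simp add: Nb_def j_def)
    have each: "bb (blk m k) j (phi k) * D j \<le> cU j" if "k \<in> Nb" for k
    proof -
      have k: "1 \<le> k" "k < i" using that by (auto simp: Nb_def)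
      have "phi k \<notin> Bad (blk m k)" using phiX(1)[OF k] by (simp add: Xs_def)
      then have "\<not> cU j < bb (blk m k) j (phi k) * D j"
        using phiX(1,3)[OF k] jT unfolding Bad_def BadK_def Xs_def by auto
      then show ?thesis by simp
    qed
    have "(\<Sum>k\<in>Nb. bb (blk m k) j (phi k)) * D j = (\<Sum>k\<in>Nb. bb (blk m k) j (phi k) * D j)"
      by (simp add: sum_distrib_right)
    also have "\<dots> \<le> (\<Sum>k\<in>Nb. cU j)" using each by (rule sum_mono)
    also have "\<dots> = card Nb * cU j" by simp
    also have "\<dots> \<le> D j * cU j" using nb by (rule mult_le_mono1)
    finally have c2: "(\<Sum>k\<in>Nb. bb (blk m k) j (phi k)) * D j \<le> cU j * D j" by (simp add: mult.commute)
    have "card C \<le> cU j"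
    proof (cases "D j = 0")
      case True
      then have "Nb = {}" using nb finNb by simp
      then show ?thesis by (simp add: C_def)
    next
      case False
      then have "(\<Sum>k\<in>Nb. bb (blk m k) j (phi k)) \<le> cU j" using c2 by simp
      then show ?thesis using c1 by linarith
    qed
    then show ?thesis by simp
  qed
  have cBad: "real (card (Bad j)) \<le> real (cU j)" using Bad_card[OF jT] .
  have finBad: "finite (Bad j)" unfolding Bad_def BadK_def using finj by auto
  have finA: "finite A" unfolding A_def by simp
  have "C \<subseteq> X' j" unfolding C_def Cs_def by auto
  then have finC: "finite C" using finj by (rule finite_subset)
  have "real (card S) \<ge> real (card (X' j)) - real (card (Bad j)) - real (card A) - real (card B) - real (card C)"
    unfolding S_def
    using card_diff_real[OF finBad, of "X' j"] card_diff_real[OF finA, of "X' j - Bad j"]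
      card_diff_real[OF finB, of "X' j - Bad j - A"] card_diff_real[OF finC, of "X' j - Bad j - A - B"]
    by linarith
  then have "real (card S) > 0" using P1j cA cC cBad cardB by linarith
  then have "S \<noteq> {}" by auto
  then show ?thesis using Ssub by auto
qed


lemma run_ok: "k \<le> n \<Longrightarrow> \<exists>phi. emb_run f Ed u m Xs k = Some phi \<and>
   (\<forall>i. 1 \<le> i \<and> i \<le> k \<longrightarrow> phi i \<in> cand f Ed u m Xs phi i)"
proof (induction k)
  case 0
  then show ?case by simp
next
  case (Suc k)
  then obtain phi where run: "emb_run f Ed u m Xs k = Some phi"
    and inv: "\<forall>i. 1 \<le> i \<and> i \<le> k \<longrightarrow> phi i \<in> cand f Ed u m Xs phi i" by auto
  define C where "C = cand f Ed u m Xs phi (Suc k)"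
  have ne: "C \<noteq> {}" unfolding C_def
    using step_nonempty[of "Suc k" phi] run inv Suc.prems by auto
  have fin: "finite C"
  proof -
    have "C \<subseteq> X' (blk m (Suc k))" unfolding C_def using Xs_sub by (auto dest: cand_D)
    moreover have "blk m (Suc k) \<le> T" using in_blk Suc.prems by auto
    ultimately show ?thesis using finX' finite_subset by blast
  qed
  define phi2 where "phi2 = phi(Suc k := Min C)"
  have r2: "emb_run f Ed u m Xs (Suc k) = Some phi2"
    unfolding phi2_def C_def using run_Suc[OF run] ne C_def by simp
  have cc: "cand f Ed u m Xs phi2 i = cand f Ed u m Xs phi i" if "1 \<le> i" "i \<le> Suc k" for i
  proof (rule cand_cong)
    show "phi2 k' = phi k'" if "1 \<le> k'" "k' < i" for k' using that \<open>i \<le> Suc k\<close> by (simp add: phi2_def)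
    show "1 \<le> k' \<and> k' < i" if "0 < blk m i" "k' \<in> Ule m (blk m i - 1)" for k'
      using Ule_before[of i k'] that \<open>1 \<le> i\<close> \<open>i \<le> Suc k\<close> Suc.prems by auto
  qed
  have "phi2 i \<in> cand f Ed u m Xs phi2 i" if "1 \<le> i" "i \<le> Suc k" for i
  proof (cases "i = Suc k")
    case True
    then show ?thesis using cc[OF that] Min_in[OF fin ne] by (simp add: phi2_def C_def)
  next
    case False
    then show ?thesis using cc[OF that] inv that by (simp add: phi2_def)
  qed
  then show ?case using r2 by blast
qed

lemma edge_ok:
  assumes cd: "\<And>i. 1 \<le> i \<Longrightarrow> i \<le> n \<Longrightarrow> phi i \<in> cand f Ed u m Xs phi i"
    and ab: "1 \<le> a" "a < b" "b \<le> n" and e: "{u a, u b} \<in> Ed" and c: "1 \<le> c" "c \<le> n"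
  shows "phi c \<notin> f {phi a, phi b}"
proof (cases "blk m c \<le> blk m b")
  case True
  have "f {phi a, phi b} \<inter> Xle Xs (blk m b) = {}" using cand_c[OF cd[of b] ab(1,2) e] ab by auto
  moreover have "phi c \<in> Xle Xs (blk m b)" using cand_D[OF cd[OF c]] True unfolding Xle_def by auto
  ultimately show ?thesis by blast
next
  case False
  have bb: "b \<in> Ublk m (blk m b)" using in_blk ab by auto
  have h: "s * 2 ^ blk m b \<le> s * 2 ^ (blk m c - 1)" using False s_pos
    by (intro mult_le_mono2 power_increasing) auto
  have b1: "b \<le> s * 2 ^ blk m b" using bb by (simp add: Ublk_eq)
  have b2: "b \<le> s * 2 ^ (blk m c - 1)" using le_trans[OF b1 h] .
  have inU: "a \<in> Ule m (blk m c - 1)" "b \<in> Ule m (blk m c - 1)" using b2 ab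
    by (auto simp: Ule_eq)
  show ?thesis using cand_b[OF cd[OF c] _ inU e] False by auto
qed

lemma final_loc:
  "(\<forall>j\<le>T. Xs j \<subseteq> X' j) \<and>
   (\<exists>phi. emb_alg f Ed u m Xs T = Some phi \<and>
      (let psi = (\<lambda>v. phi (the_inv_into {1..n} u v)) in
         inj_on psi V \<and> psi ` V \<subseteq> X \<and>
         (\<forall>v w. {v, w} \<in> Ed \<longrightarrow> f {psi v, psi w} \<inter> psi ` V = {})))"
proof -
  obtain phi where run: "emb_run f Ed u m Xs n = Some phi"
    and cd0: "\<forall>i. 1 \<le> i \<and> i \<le> n \<longrightarrow> phi i \<in> cand f Ed u m Xs phi i"
    using run_ok[of n] by auto
  have cd: "\<And>i. 1 \<le> i \<Longrightarrow> i \<le> n \<Longrightarrow> phi i \<in> cand f Ed u m Xs phi i" using cd0 by auto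
  have ea: "emb_alg f Ed u m Xs T = Some phi" using run emb_alg_eq nT by simp
  define g where "g = the_inv_into {1..n} u"
  have gb: "bij_betw g V {1..n}" unfolding g_def using u by (rule bij_betw_the_inv_into)
  have ug: "u (g v) = v" if "v \<in> V" for v
    unfolding g_def using u that by (simp add: bij_betw_def f_the_inv_into_f)
  have injphi: "inj_on phi {1..n}"
  proof (rule inj_onI)
    fix a b assume a: "a \<in> {1..n}" and b: "b \<in> {1..n}" and eq: "phi a = phi b"
    show "a = b"
    proof (rule ccontr)
      assume "a \<noteq> b"
      then consider "a < b" | "b < a" by linarith
      then show False
      proof cases
        case 1
        then have "phi a \<in> phi ` {1..<b}" using a by auto
        then show False using cand_D[OF cd[of b]] b eq by auto
      next
        case 2
        then have "phi b \<in> phi ` {1..<a}" using b by auto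
        then show False using cand_D[OF cd[of a]] a eq by auto
      qed
    qed
  qed
  have gV: "g ` V = {1..n}" using gb by (simp add: bij_betw_def)
  have img: "(\<lambda>v. phi (g v)) ` V = phi ` {1..n}" unfolding gV[symmetric] by (simp add: image_image)
  have inj: "inj_on (\<lambda>v. phi (g v)) V"
    using comp_inj_on[of g V phi] gb injphi by (auto simp: bij_betw_def comp_def)
  have sub: "phi ` {1..n} \<subseteq> X"
  proof
    fix x assume "x \<in> phi ` {1..n}"
    then obtain i where i: "1 \<le> i" "i \<le> n" "x = phi i" by auto
    then have "x \<in> X' (blk m i)" "blk m i \<le> T" using cand_D[OF cd[OF i(1,2)]] Xs_sub in_blk by auto
    then show "x \<in> X" using X'_sub by auto
  qed
  have edges: "f {phi (g v), phi (g w)} \<inter> phi ` {1..n} = {}" if e: "{v, w} \<in> Ed" for v w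
  proof -
    have vw: "v \<in> V" "w \<in> V" "v \<noteq> w" using Ed_sub[OF e] by (auto simp: card_insert_if split: if_splits)
    have gv: "g v \<in> {1..n}" "g w \<in> {1..n}" using gb vw by (auto simp: bij_betw_def)
    have ne: "g v \<noteq> g w" using ug vw by metis
    have e': "{u (g v), u (g w)} \<in> Ed" using e ug vw by simp
    show ?thesis
    proof (cases "g v < g w")
      case True
      then show ?thesis using edge_ok[OF cd _ True _ e'] gv by auto
    next
      case False
      then have lt: "g w < g v" using ne by linarith
      have e'': "{u (g w), u (g v)} \<in> Ed" using e' by (simp add: insert_commute)
      have "{phi (g v), phi (g w)} = {phi (g w), phi (g v)}" by (simp add: insert_commute)
      then show ?thesis using edge_ok[OF cd _ lt _ e''] gv by auto
    qed
  qed
  show ?thesis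
    unfolding Let_def g_def[symmetric]
  proof (intro conjI exI[of _ phi])
    show "\<forall>j\<le>T. Xs j \<subseteq> X' j" using Xs_sub by simp
    show "emb_alg f Ed u m Xs T = Some phi" by (rule ea)
    show "inj_on (\<lambda>v. phi (g v)) V" by (rule inj)
    show "(\<lambda>v. phi (g v)) ` V \<subseteq> X" using sub img by simp
    show "\<forall>v w. {v, w} \<in> Ed \<longrightarrow> f {phi (g v), phi (g w)} \<inter> (\<lambda>v. phi (g v)) ` V = {}"
      using edges img by simp
  qed
qed

end

theorem lemma2p2:
  fixes l N n m T :: nat
    and f :: "nat set \<Rightarrow> nat set"
    and V :: "'a set" and Ed :: "'a set set"
    and u :: "nat \<Rightarrow> 'a"
    and X :: "nat set" and X' :: "nat \<Rightarrow> nat set"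
  assumes l: "1 \<le> l"
    and f: "\<And>e. e \<subseteq> {1..N} \<Longrightarrow> card e = 2 \<Longrightarrow>
              f e \<subseteq> {1..N} \<and> card (f e) = l \<and> f e \<inter> e = {}"
    and X_def: "X = Xset f N l"
    and G: "finite V" "\<And>e. e \<in> Ed \<Longrightarrow> e \<subseteq> V \<and> card e = 2"
    and n: "n = card V" and m: "m = card Ed"
    and sq: "\<exists>s::nat. m = s ^ 2"
    and T: "0 < T" "real n / sqrt (real m) = 2 ^ T"
    and isol: "real (card {v \<in> V. deg Ed v = 0}) < real n / 2"
    and u: "bij_betw u {1..n} V"
    and u_ord: "\<And>i j. 1 \<le> i \<Longrightarrow> i < j \<Longrightarrow> j \<le> n \<Longrightarrow> deg Ed (u j) \<le> deg Ed (u i)"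
    and X'_sub: "\<And>j. j \<le> T \<Longrightarrow> X' j \<subseteq> X"
    and X'_disj: "\<And>i j. i \<le> T \<Longrightarrow> j \<le> T \<Longrightarrow> i \<noteq> j \<Longrightarrow> X' i \<inter> X' j = {}"
    and P1: "\<And>j. j \<le> T \<Longrightarrow>
              3.9 * real (card (u ` Ublk m j)) < real (card (X' j))
            \<and> real (card (X' j)) < 4.1 * real (card (u ` Ublk m j))"
    and P2: "\<And>j Xs phi. j < T \<Longrightarrow> (\<forall>i\<le>j. Xs i \<subseteq> X' i) \<Longrightarrow>
              emb_alg f Ed u m Xs j = Some phi \<Longrightarrow>
              real (card ((\<Union>{f {phi k, phi k'} | k k'. k \<in> Ule m j \<and> k' \<in> Ule m j
                                                   \<and> {u k, u k'} \<in> Ed}) \<inter> X' (Suc j)))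
                \<le> real (card (X' (Suc j))) / 9"
    and P3: "\<And>i j. i \<le> j \<Longrightarrow> j \<le> T \<Longrightarrow>
              real (card {(x, y). x \<in> X' i \<and> y \<in> X' j \<and> x \<noteq> y
                                  \<and> f {x, y} \<inter> Xle X' j \<noteq> {}})
                \<le> real (card (u ` Ublk m i)) * real (card (u ` Ublk m j)) ^ 2 / (5 * real m)"
  shows "\<exists>Xs. (\<forall>j\<le>T. Xs j \<subseteq> X' j) \<and>
           (\<exists>phi. emb_alg f Ed u m Xs T = Some phi \<and>
              (let psi = (\<lambda>v. phi (the_inv_into {1..n} u v)) in
                 inj_on psi V \<and> psi ` V \<subseteq> X \<and>
                 (\<forall>v w. {v, w} \<in> Ed \<longrightarrow> f {psi v, psi w} \<inter> psi ` V = {})))"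
proof -
  obtain s where ms: "m = s ^ 2" using sq by blast
  have sq': "sqrt (real m) = real s" using ms by simp
  have s_pos: "0 < s"
  proof (rule ccontr)
    assume "\<not> 0 < s"
    then have "s = 0" by simp
    then show False using T(2) sq' by simp
  qed
  have "real n = 2 ^ T * real s" using T(2) sq' s_pos by (simp add: divide_eq_eq)
  then have "real n = real (s * 2 ^ T)" by simp
  then have nT: "n = s * 2 ^ T" by (simp only: of_nat_eq_iff)
  have finX: "finite X" unfolding X_def Xset_def by simp
  have loc: "embctx n m T s f V Ed u X X'"
    by (unfold_locales) (fact finX G(1) G(2) n m ms s_pos nT u u_ord X'_sub X'_disj P1 P2 P3)+
  show ?thesis using embctx.final_loc[OF loc] by blast
qed

end
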